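(* Let $(Z,Z_{ac},e)$ be an accretive archimedean matrix-order unit space and let $((V,V_{ac}),\psi)$ be a $*$-closure of $(Z,Z_{ac})$. Then $f=\psi(e)$ is an accretive archimedean matrix-order unit for $(V,V_{ac})$.
   Context: For a complex vector space $Z$, $M_n(Z)$ is the $n\times n$ matrices over $Z$; $e\otimes I_n$ is the diagonal matrix with all diagonal entries $e$. A cone is a set $C$ with $C+C\subseteq C$, $tC\subseteq C$ ($t\ge0$); a matrix cone is a sequence of cones $C_n\subseteq M_n(Z)$ with $X^*C_nX\subseteq C_k$ for all scalar $X\in M_{n,k}$; it is $\mathbb{C}$-proper if $C_1\cap-C_1\cap iC_1\cap-iC_1=\{0\}$, and then $(Z,Z_{ac})$ is an accretive matrix-ordered vector space, with $Z_{sa}^n=iZ_{ac}^n\cap-iZ_{ac}^n$. An element $e\in Z_{sa}^1$ is an accretive matrix-order unit if for each $n$ and $z\in M_n(Z)$ there is $t>0$ with $te\otimes I_n+z\in Z_{ac}^n$; it is archimedean if $te\otimes I_n+z\in Z_{ac}^n$ for all $t>0$ implies $z\in Z_{ac}^n$; $(Z,Z_{ac},e)$ is then an accretive archimedean matrix-order unit space. $(V,V_{ac})$ is self-adjoint if $V=\operatorname{span}_{\mathbb{C}}V_{sa}^1$; then $M_n(V)$ carries a unique conjugate-linear involution fixing $V_{sa}^n$, given by $[v_{kl}]^*=[v_{lk}^*]$. A linear map is real-completely positive if its entrywise amplifications preserve the accretive cones; a real-complete order embedding if it is injective and it and its inverse on the range are real-completely positive. A $*$-closure of $(Z,Z_{ac})$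 is a pair $((V,V_{ac}),\psi)$ with $(V,V_{ac})$ a self-adjoint accretive matrix-ordered vector space, $\psi:Z\to V$ a real-complete order embedding, and $V=\psi(Z)+\psi(Z)^*$. *)

theory Defs
  imports Complex_Main "HOL-Library.Function_Algebras"
begin

text \<open>A complex vector space is represented by a carrier type 'a::ab_group_add with a
  scalar multiplication s :: complex \<Rightarrow> 'a \<Rightarrow> 'a satisfying the vector_space axioms.
  An n x n matrix over 'a is a function nat \<Rightarrow> nat \<Rightarrow> 'a vanishing outside
  {0..<n} x {0..<n}; M_n(Z) is represented by the set of such functions.
  A matrix cone is a family C :: nat \<Rightarrow> matrix set, indexed by n \<ge> 1.\<close>

type_synonym 'a mat = "nat \<Rightarrow> nat \<Rightarrow> 'a"

definition is_mat :: "nat \<Rightarrow> 'a::zero mat \<Rightarrow> bool" where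
  "is_mat n A \<longleftrightarrow> (\<forall>i j. (n \<le> i \<or> n \<le> j) \<longrightarrow> A i j = 0)"

definition mscale :: "(complex \<Rightarrow> 'a \<Rightarrow> 'a) \<Rightarrow> complex \<Rightarrow> 'a mat \<Rightarrow> 'a mat" where
  "mscale s c A = (\<lambda>i j. s c (A i j))"

definition mmap :: "('a \<Rightarrow> 'b) \<Rightarrow> 'a mat \<Rightarrow> 'b mat" where
  "mmap f A = (\<lambda>i j. f (A i j))"

definition emb1 :: "'a::zero \<Rightarrow> 'a mat" where
  "emb1 z = (\<lambda>i j. if i = 0 \<and> j = 0 then z else 0)"

definition diagm :: "nat \<Rightarrow> 'a::zero \<Rightarrow> 'a mat" where
  "diagm n e = (\<lambda>i j. if i = j \<and> i < n then e else 0)"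

text \<open>X^* A X for a scalar matrix X \<in> M_{n,k}(C) and A \<in> M_n(Z).\<close>
definition conj_mul :: "(complex \<Rightarrow> 'a \<Rightarrow> 'a) \<Rightarrow> nat \<Rightarrow> nat \<Rightarrow> complex mat \<Rightarrow> 'a::comm_monoid_add mat \<Rightarrow> 'a mat" where
  "conj_mul s n k X A = (\<lambda>p q. if p < k \<and> q < k
      then (\<Sum>i<n. \<Sum>j<n. s (cnj (X i p) * X j q) (A i j)) else 0)"

definition is_cone :: "(complex \<Rightarrow> 'a \<Rightarrow> 'a) \<Rightarrow> 'a::plus mat set \<Rightarrow> bool" where
  "is_cone s K \<longleftrightarrow> (\<forall>x\<in>K. \<forall>y\<in>K. x + y \<in> K) \<and>
                    (\<forall>t::real. t \<ge> 0 \<longrightarrow> (\<forall>x\<in>K. mscale s (complex_of_real t) x \<in> K))"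

definition matrix_cone :: "(complex \<Rightarrow> 'a \<Rightarrow> 'a) \<Rightarrow> (nat \<Rightarrow> 'a::comm_monoid_add mat set) \<Rightarrow> bool" where
  "matrix_cone s C \<longleftrightarrow>
     (\<forall>n\<ge>1. C n \<subseteq> {A. is_mat n A} \<and> is_cone s (C n)) \<and>
     (\<forall>n\<ge>1. \<forall>k\<ge>1. \<forall>X A. A \<in> C n \<longrightarrow> conj_mul s n k X A \<in> C k)"

text \<open>C_1 \<inter> -C_1 \<inter> iC_1 \<inter> -iC_1 = {0}  (A \<in> iC iff -iA \<in> C, A \<in> -iC iff iA \<in> C).\<close>
definition C_proper :: "(complex \<Rightarrow> 'a \<Rightarrow> 'a) \<Rightarrow> (nat \<Rightarrow> 'a::ab_group_add mat set) \<Rightarrow> bool" where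
  "C_proper s C \<longleftrightarrow> (\<forall>A. A \<in> C 1 \<and> - A \<in> C 1 \<and> mscale s (- \<i>) A \<in> C 1 \<and> mscale s \<i> A \<in> C 1
                        \<longrightarrow> A = 0)"

text \<open>Z_sa^n = i Z_ac^n \<inter> -i Z_ac^n\<close>
definition sa_part :: "(complex \<Rightarrow> 'a \<Rightarrow> 'a) \<Rightarrow> (nat \<Rightarrow> 'a mat set) \<Rightarrow> nat \<Rightarrow> 'a mat set" where
  "sa_part s C n = {A. mscale s (- \<i>) A \<in> C n \<and> mscale s \<i> A \<in> C n}"

definition accretive_mo_space :: "(complex \<Rightarrow> 'a \<Rightarrow> 'a) \<Rightarrow> (nat \<Rightarrow> 'a::ab_group_add mat set) \<Rightarrow> bool" where
  "accretive_mo_space s C \<longleftrightarrow> vector_space s \<and> matrix_cone s C \<and> C_proper s C"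

definition accretive_mo_unit :: "(complex \<Rightarrow> 'a \<Rightarrow> 'a) \<Rightarrow> (nat \<Rightarrow> 'a::ab_group_add mat set) \<Rightarrow> 'a \<Rightarrow> bool" where
  "accretive_mo_unit s C e \<longleftrightarrow> emb1 e \<in> sa_part s C 1 \<and>
     (\<forall>n\<ge>1. \<forall>A. is_mat n A \<longrightarrow>
        (\<exists>t::real. t > 0 \<and> mscale s (complex_of_real t) (diagm n e) + A \<in> C n))"

definition archimedean_unit :: "(complex \<Rightarrow> 'a \<Rightarrow> 'a) \<Rightarrow> (nat \<Rightarrow> 'a::ab_group_add mat set) \<Rightarrow> 'a \<Rightarrow> bool" where
  "archimedean_unit s C e \<longleftrightarrow>
     (\<forall>n\<ge>1. \<forall>A. is_mat n A \<longrightarrow>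
        (\<forall>t::real. t > 0 \<longrightarrow> mscale s (complex_of_real t) (diagm n e) + A \<in> C n) \<longrightarrow> A \<in> C n)"

definition accretive_amou_space :: "(complex \<Rightarrow> 'a \<Rightarrow> 'a) \<Rightarrow> (nat \<Rightarrow> 'a::ab_group_add mat set) \<Rightarrow> 'a \<Rightarrow> bool" where
  "accretive_amou_space s C e \<longleftrightarrow> accretive_mo_space s C \<and> accretive_mo_unit s C e \<and> archimedean_unit s C e"

definition self_adjoint :: "(complex \<Rightarrow> 'a \<Rightarrow> 'a) \<Rightarrow> (nat \<Rightarrow> 'a::ab_group_add mat set) \<Rightarrow> bool" where
  "self_adjoint s C \<longleftrightarrow> accretive_mo_space s C \<and>
     module.span s {v. emb1 v \<in> sa_part s C 1} = UNIV"

text \<open>The involution on a self-adjoint space: (a + i b)^* = a - i b for a, b \<in> V_sa^1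
  (well defined by C-properness).\<close>
definition adj :: "(complex \<Rightarrow> 'a \<Rightarrow> 'a) \<Rightarrow> (nat \<Rightarrow> 'a::ab_group_add mat set) \<Rightarrow> 'a \<Rightarrow> 'a" where
  "adj s C v = (SOME w. \<exists>a b. emb1 a \<in> sa_part s C 1 \<and> emb1 b \<in> sa_part s C 1 \<and>
                          v = a + s \<i> b \<and> w = a - s \<i> b)"

definition real_cp :: "(nat \<Rightarrow> 'a::zero mat set) \<Rightarrow> (nat \<Rightarrow> 'b mat set) \<Rightarrow> ('a \<Rightarrow> 'b) \<Rightarrow> bool" where
  "real_cp CZ CV f \<longleftrightarrow> (\<forall>n\<ge>1. \<forall>A. A \<in> CZ n \<longrightarrow> mmap f A \<in> CV n)"

definition real_complete_order_embedding ::
  "(complex \<Rightarrow> 'a::ab_group_add \<Rightarrow> 'a) \<Rightarrow> (nat \<Rightarrow> 'a mat set) \<Rightarrow>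
   (complex \<Rightarrow> 'b::ab_group_add \<Rightarrow> 'b) \<Rightarrow> (nat \<Rightarrow> 'b mat set) \<Rightarrow> ('a \<Rightarrow> 'b) \<Rightarrow> bool" where
  "real_complete_order_embedding sZ CZ sV CV f \<longleftrightarrow>
     Vector_Spaces.linear sZ sV f \<and> inj f \<and> real_cp CZ CV f \<and>
     (\<forall>n\<ge>1. \<forall>A. is_mat n A \<and> mmap f A \<in> CV n \<longrightarrow> A \<in> CZ n)"

definition star_closure ::
  "(complex \<Rightarrow> 'a::ab_group_add \<Rightarrow> 'a) \<Rightarrow> (nat \<Rightarrow> 'a mat set) \<Rightarrow>
   (complex \<Rightarrow> 'b::ab_group_add \<Rightarrow> 'b) \<Rightarrow> (nat \<Rightarrow> 'b mat set) \<Rightarrow> ('a \<Rightarrow> 'b) \<Rightarrow> bool" where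
  "star_closure sZ CZ sV CV \<psi> \<longleftrightarrow>
     self_adjoint sV CV \<and> real_complete_order_embedding sZ CZ sV CV \<psi> \<and>
     (\<forall>v. \<exists>z w. v = \<psi> z + adj sV CV (\<psi> w))"

end

theory Submission
  imports Defs
begin

lemma sum_fun_app: "(sum f A) x = sum (\<lambda>a. f a x) A"
  by (induction A rule: infinite_finite_induct) auto

lemma mscale_emb1:
  assumes "vector_space s" shows "mscale s c (emb1 v) = emb1 (s c v)"
proof -
  interpret V: vector_space s by (rule assms)
  show ?thesis unfolding mscale_def emb1_def by (rule ext)+ simp
qed

lemma ifcomb: "((if c1 then x else 0) - (if c2 then x else 0)) + ((if c1 then -y else 0) - (if c2 then y else 0))
   = (if c1 then x - y else 0) - (if c2 then x + y else (0::'a::ab_group_add))"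
  by (cases c1; cases c2) (simp_all add: algebra_simps)

definition dlt :: "nat \<Rightarrow> nat \<Rightarrow> complex" where "dlt k p = (if p = k then 1 else 0)"

lemma coef1: "complex_of_real (1/2) * ((cnj (dlt k p + \<i> * dlt l p) * (dlt k q + \<i> * dlt l q))*\<i> - (cnj (dlt k p - \<i> * dlt l p) * (dlt k q - \<i> * dlt l q))*\<i>)
       = (if k = q \<and> l = p then 1 else 0) - (if k = p \<and> l = q then 1 else 0)"
  unfolding dlt_def by (cases "p=k"; cases "p=l"; cases "q=k"; cases "q=l") (simp_all add: algebra_simps complex_eq_iff)

lemma coef2: "complex_of_real (1/2) * ((cnj (dlt k p - dlt l p) * (dlt k q - dlt l q))*\<i> - (cnj (dlt k p + dlt l p) * (dlt k q + dlt l q))*\<i>)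
       = (if k = q \<and> l = p then -\<i> else 0) - (if k = p \<and> l = q then \<i> else 0)"
  unfolding dlt_def by (cases "p=k"; cases "p=l"; cases "q=k"; cases "q=l") (simp_all add: algebra_simps complex_eq_iff)

locale sas =
  fixes s :: "complex \<Rightarrow> 'a::ab_group_add \<Rightarrow> 'a" and C :: "nat \<Rightarrow> 'a mat set"
  assumes vs: "vector_space s" and mc: "matrix_cone s C" and cp: "C_proper s C"
    and sp: "module.span s {v. emb1 v \<in> sa_part s C 1} = UNIV"
    and ne: "C 1 \<noteq> {}"
begin

sublocale V: vector_space s by (rule vs)

abbreviation "SA \<equiv> {v. emb1 v \<in> sa_part s C 1}"

lemma SA_iff: "emb1 v \<in> sa_part s C 1 \<longleftrightarrow> emb1 (s (-\<i>) v) \<in> C 1 \<and> emb1 (s \<i> v) \<in> C 1"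
  by (simp add: sa_part_def mscale_emb1[OF vs])

lemma SA_iff': "emb1 v \<in> sa_part s C (Suc 0) \<longleftrightarrow> emb1 (s (-\<i>) v) \<in> C (Suc 0) \<and> emb1 (s \<i> v) \<in> C (Suc 0)"
  using SA_iff by simp

lemma emb1_0: "emb1 0 = 0"
  unfolding emb1_def by (rule ext)+ simp

lemma C_add: "n \<ge> 1 \<Longrightarrow> A \<in> C n \<Longrightarrow> B \<in> C n \<Longrightarrow> A + B \<in> C n"
  using mc unfolding matrix_cone_def is_cone_def by blast

lemma C_scale: "n \<ge> 1 \<Longrightarrow> t \<ge> 0 \<Longrightarrow> A \<in> C n \<Longrightarrow> mscale s (complex_of_real t) A \<in> C n"
  using mc unfolding matrix_cone_def is_cone_def by blast

lemma C_conj: "n \<ge> 1 \<Longrightarrow> k \<ge> 1 \<Longrightarrow> A \<in> C n \<Longrightarrow> conj_mul s n k X A \<in> C k"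
  using mc unfolding matrix_cone_def by blast

lemma C_zero: assumes "k \<ge> 1" shows "0 \<in> C k"
proof -
  obtain A where A: "A \<in> C 1" using ne by blast
  have "conj_mul s 1 k (\<lambda>_ _. 0) A \<in> C k" by (rule C_conj[OF _ assms A]) simp
  moreover have "conj_mul s 1 k (\<lambda>_ _. 0) A = 0"
    unfolding conj_mul_def by (rule ext)+ simp
  ultimately show ?thesis by simp
qed

lemma C_sum: "n \<ge> 1 \<Longrightarrow> (\<And>i. i \<in> F \<Longrightarrow> f i \<in> C n) \<Longrightarrow> sum f F \<in> C n"
  by (induction F rule: infinite_finite_induct) (auto simp: C_zero C_add)

lemma SA_zero: "0 \<in> SA"
  using C_zero[of 1] by (simp add: SA_iff SA_iff' emb1_0)

lemma SA_add: "a \<in> SA \<Longrightarrow> b \<in> SA \<Longrightarrow> a + b \<in> SA"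
proof -
  assume a: "a \<in> SA" and b: "b \<in> SA"
  have e: "emb1 (x + y) = emb1 x + emb1 y" for x y :: 'a
    unfolding emb1_def by (rule ext)+ simp
  show ?thesis using a b C_add[of 1] unfolding mem_Collect_eq SA_iff
    by (simp only: V.scale_right_distrib e)
qed

lemma SA_rscale: assumes a: "a \<in> SA" shows "s (complex_of_real t) a \<in> SA"
proof -
  have a1: "emb1 (s (-\<i>) a) \<in> C 1" and a2: "emb1 (s \<i> a) \<in> C 1"
    using a unfolding mem_Collect_eq SA_iff by auto
  have sc: "emb1 (s (complex_of_real r) v) \<in> C 1" if "r \<ge> 0" "emb1 v \<in> C 1" for r v
    using C_scale[of 1 r "emb1 v"] that by (simp add: mscale_emb1[OF vs])
  show ?thesis
  proof (cases "t \<ge> 0")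
    case True
    have "s (-\<i>) (s (complex_of_real t) a) = s (complex_of_real t) (s (-\<i>) a)"
      "s \<i> (s (complex_of_real t) a) = s (complex_of_real t) (s \<i> a)"
      by (simp_all only: V.scale_scale mult.commute)
    then show ?thesis unfolding mem_Collect_eq SA_iff using sc[OF True a1] sc[OF True a2] by (simp add: mult.commute)
  next
    case False
    then have F: "-t \<ge> 0" by simp
    have "s (-\<i>) (s (complex_of_real t) a) = s (complex_of_real (-t)) (s \<i> a)"
      "s \<i> (s (complex_of_real t) a) = s (complex_of_real (-t)) (s (-\<i>) a)"
      by (simp_all only: V.scale_scale) (simp_all add: mult.commute)
    then show ?thesis unfolding mem_Collect_eq SA_iff using sc[OF F a1] sc[OF F a2] by (metis (no_types) mult.commute)
  qed
qed

lemma SA_neg: "a \<in> SA \<Longrightarrow> - a \<in> SA"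
  using SA_rscale[of a "-1"] by simp

lemma decomp: "\<exists>a b. a \<in> SA \<and> b \<in> SA \<and> v = a + s \<i> b"
proof -
  have "v \<in> V.span SA" using sp by simp
  then show ?thesis
  proof (induction rule: V.span_induct_alt)
    case base
    have "(0::'a) = 0 + s \<i> 0" by simp
    then show ?case using SA_zero by blast
  next
    case (step c x y)
    then obtain a b where ab: "a \<in> SA" "b \<in> SA" "y = a + s \<i> b" by blast
    have "s c x = s (complex_of_real (Re c) + \<i> * complex_of_real (Im c)) x"
      by (simp only: complex_eq[symmetric])
    also have "\<dots> = s (complex_of_real (Re c)) x + s \<i> (s (complex_of_real (Im c)) x)"
      by (simp only: V.scale_left_distrib V.scale_scale)
    finally have eq: "s c x = s (complex_of_real (Re c)) x + s \<i> (s (complex_of_real (Im c)) x)" .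
    have "s c x + y = (s (complex_of_real (Re c)) x + a) + s \<i> (s (complex_of_real (Im c)) x + b)"
      by (simp only: eq ab(3) V.scale_right_distrib add_ac)
    moreover have "s (complex_of_real (Re c)) x + a \<in> SA"
      using ab(1) step(1) by (intro SA_add SA_rscale)
    moreover have "s (complex_of_real (Im c)) x + b \<in> SA"
      using ab(2) step(1) by (intro SA_add SA_rscale)
    ultimately show ?case by blast
  qed
qed

lemma uniq0: assumes "a \<in> SA" "b \<in> SA" "a + s \<i> b = 0" shows "a = 0 \<and> b = 0"
proof -
  have a: "a = - s \<i> b" using assms(3) by (simp only: eq_neg_iff_add_eq_0)
  have sb2: "emb1 (s (-\<i>) b) \<in> C 1" and sb1: "emb1 (s \<i> b) \<in> C 1"
    using assms(2) unfolding mem_Collect_eq SA_iff by auto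
  have sa2: "emb1 (s (-\<i>) a) \<in> C 1" and sa1: "emb1 (s \<i> a) \<in> C 1"
    using assms(1) unfolding mem_Collect_eq SA_iff by auto
  have "emb1 a \<in> C 1" using sb2 by (simp only: a V.scale_minus_left)
  moreover have "- emb1 a \<in> C 1"
  proof -
    have "- emb1 a = emb1 (s \<i> b)" unfolding a emb1_def by (rule ext)+ simp
    then show ?thesis using sb1 by (simp only:)
  qed
  moreover have "mscale s (-\<i>) (emb1 a) \<in> C 1" "mscale s \<i> (emb1 a) \<in> C 1"
    using sa1 sa2 by (simp_all only: mscale_emb1[OF vs])
  ultimately have "emb1 a = 0" using cp unfolding C_proper_def by blast
  then have "emb1 a 0 0 = 0" by simp
  then have a0: "a = 0" by (simp add: emb1_def)
  then have "s \<i> b = 0" using a by simp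
  then have "s (-\<i>) (s \<i> b) = 0" by (simp only: V.scale_zero_right)
  then have "b = 0" by (simp only: V.scale_scale) simp
  with a0 show ?thesis by simp
qed

lemma uniq: assumes "a \<in> SA" "b \<in> SA" "a' \<in> SA" "b' \<in> SA" "a + s \<i> b = a' + s \<i> b'"
  shows "a = a' \<and> b = b'"
proof -
  have eq: "(a - a') + s \<i> (b - b') = (a + s \<i> b) - (a' + s \<i> b')"
    by (simp only: V.scale_right_diff_distrib add_diff_add)
  have d: "(a - a') + s \<i> (b - b') = 0" by (simp only: eq assms(5) diff_self)
  have s1: "a - a' \<in> SA" unfolding diff_conv_add_uminus by (intro SA_add SA_neg assms)
  have s2: "b - b' \<in> SA" unfolding diff_conv_add_uminus by (intro SA_add SA_neg assms)
  from uniq0[OF s1 s2 d] show ?thesis by simp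
qed

lemma adj_eq: assumes "a \<in> SA" "b \<in> SA" "v = a + s \<i> b" shows "adj s C v = a - s \<i> b"
proof -
  have ex: "\<exists>w. \<exists>a b. emb1 a \<in> sa_part s C 1 \<and> emb1 b \<in> sa_part s C 1 \<and> v = a + s \<i> b \<and> w = a - s \<i> b"
    using assms by blast
  have "\<exists>a' b'. emb1 a' \<in> sa_part s C 1 \<and> emb1 b' \<in> sa_part s C 1 \<and> v = a' + s \<i> b' \<and> adj s C v = a' - s \<i> b'"
    unfolding adj_def by (rule someI_ex[OF ex])
  then obtain a' b' where "a' \<in> SA" "b' \<in> SA" "v = a' + s \<i> b'" "adj s C v = a' - s \<i> b'" by blast
  with uniq[OF assms(1,2)] assms(3) show ?thesis by metis
qed

lemma adj_neg: "adj s C (- v) = - adj s C v"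
proof -
  obtain a b where ab: "a \<in> SA" "b \<in> SA" "v = a + s \<i> b" using decomp by blast
  have n1: "- a \<in> SA" using ab(1) by (rule SA_neg)
  have n2: "- b \<in> SA" using ab(2) by (rule SA_neg)
  note n = n1 n2
  have "- v = - a + s \<i> (- b)" using ab(3) by simp
  then have "adj s C (-v) = - a - s \<i> (- b)" by (rule adj_eq[OF n])
  then show ?thesis using adj_eq[OF ab] by simp
qed

lemma ifscale: "s (if c then d else 0) x = (if c then s d x else 0)"
  by simp

lemma comb: "s h (s c3 (s \<i> a) + s c4 (s (-\<i>) a) + s c1 (s (-\<i>) b) + s c2 (s \<i> b))
   = s (h*(c3*\<i> - c4*\<i>)) a + s (h*(c2*\<i> - c1*\<i>)) b"
proof -
  have h1: "h*(c3*\<i> - c4*\<i>) = h*(c3*\<i>) + h*(c4*(-\<i>))" by (simp add: algebra_simps)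
  have h2: "h*(c2*\<i> - c1*\<i>) = h*(c1*(-\<i>)) + h*(c2*\<i>)" by (simp add: algebra_simps)
  show ?thesis
    by (simp only: h1 h2 V.scale_right_distrib V.scale_scale V.scale_left_distrib add.assoc)
qed

lemma dsum: assumes "p < n" "q < n"
  shows "(\<Sum>k<(n::nat). \<Sum>l<n. if k = q \<and> l = p then f k l else 0) = (f q p :: 'a)"
proof -
  have "(\<Sum>l<n. if k = q \<and> l = p then f k l else 0) = (if k = q then f k p else 0)" for k
    using assms by (cases "k = q") (simp_all add: sum.delta)
  then show ?thesis using assms by simp
qed

lemma skew:
  assumes n: "n \<ge> 1"
  shows "(\<lambda>p q. if p < n \<and> q < n then adj s C (Q q p) - Q p q else 0) \<in> C n"
proof -
  have "\<forall>v. \<exists>ab. fst ab \<in> SA \<and> snd ab \<in> SA \<and> v = fst ab + s \<i> (snd ab)"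
    using decomp by (metis fst_conv snd_conv)
  then obtain g where g: "\<And>v. fst (g v) \<in> SA \<and> snd (g v) \<in> SA \<and> v = fst (g v) + s \<i> (snd (g v))"
    using choice by metis
  define a where "a k l = fst (g (Q k l))" for k l
  define b where "b k l = snd (g (Q k l))" for k l
  have aSA: "a k l \<in> SA" and bSA: "b k l \<in> SA" and Qab: "Q k l = a k l + s \<i> (b k l)" for k l
    unfolding a_def b_def using g[of "Q k l"] by blast+
  have adjQ: "adj s C (Q k l) = a k l - s \<i> (b k l)" for k l
    using adj_eq[OF aSA bSA Qab] .
  define R where "R x z = conj_mul s 1 n (\<lambda>i p. x p) (emb1 z)" for x :: "nat \<Rightarrow> complex" and z
  have R: "R x z p q = (if p < n \<and> q < n then s (cnj (x p) * x q) z else 0)" for x z p q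
    unfolding R_def conj_mul_def emb1_def by simp
  have RC: "emb1 z \<in> C 1 \<Longrightarrow> R x z \<in> C n" for x z unfolding R_def using C_conj n by simp
  define x1 where "x1 k l p = dlt k p + dlt l p" for k l p
  define x2 where "x2 k l p = dlt k p - dlt l p" for k l p
  define x3 where "x3 k l p = dlt k p + \<i> * dlt l p" for k l p
  define x4 where "x4 k l p = dlt k p - \<i> * dlt l p" for k l p
  define T where "T k l = mscale s (complex_of_real (1/2))
     (R (x3 k l) (s \<i> (a k l)) + R (x4 k l) (s (-\<i>) (a k l)) + R (x1 k l) (s (-\<i>) (b k l))
      + R (x2 k l) (s \<i> (b k l)))" for k l
  have TC: "T k l \<in> C n" for k l
  proof -
    have "emb1 (s \<i> (a k l)) \<in> C 1" "emb1 (s (-\<i>) (a k l)) \<in> C 1"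
      "emb1 (s \<i> (b k l)) \<in> C 1" "emb1 (s (-\<i>) (b k l)) \<in> C 1"
      using aSA[of k l] bSA[of k l] unfolding mem_Collect_eq SA_iff by auto
    then show ?thesis unfolding T_def using n by (intro C_scale C_add RC) auto
  qed
  have Tval: "T k l p q = (if p < n \<and> q < n then
      (if k = q \<and> l = p then a k l - s \<i> (b k l) else 0) - (if k = p \<and> l = q then a k l + s \<i> (b k l) else 0)
      else 0)" for k l p q
  proof (cases "p < n \<and> q < n")
    case False
    then have R0: "R x z p q = 0" for x z by (auto simp: R)
    have T0: "T k l p q = 0" unfolding T_def mscale_def plus_fun_apply
      by (simp only: R0 add_0_left V.scale_zero_right)
    show ?thesis by (subst if_not_P[OF False]) (rule T0)
  next
    case True
    have e1: "T k l p q = s (complex_of_real (1/2) * ((cnj (x3 k l p) * x3 k l q)*\<i> - (cnj (x4 k l p) * x4 k l q)*\<i>)) (a k l)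
       + s (complex_of_real (1/2) * ((cnj (x2 k l p) * x2 k l q)*\<i> - (cnj (x1 k l p) * x1 k l q)*\<i>)) (b k l)"
      unfolding T_def mscale_def plus_fun_apply R using True by (simp only: True simp_thms if_True comb)
    have e2: "complex_of_real (1/2) * ((cnj (x3 k l p) * x3 k l q)*\<i> - (cnj (x4 k l p) * x4 k l q)*\<i>)
       = (if k = q \<and> l = p then 1 else 0) - (if k = p \<and> l = q then 1 else 0)"
      unfolding x3_def x4_def by (rule coef1)
    have e3: "complex_of_real (1/2) * ((cnj (x2 k l p) * x2 k l q)*\<i> - (cnj (x1 k l p) * x1 k l q)*\<i>)
       = (if k = q \<and> l = p then -\<i> else 0) - (if k = p \<and> l = q then \<i> else 0)"
      unfolding x1_def x2_def by (rule coef2)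
    have "T k l p q = s ((if k = q \<and> l = p then 1 else 0) - (if k = p \<and> l = q then 1 else 0)) (a k l)
       + s ((if k = q \<and> l = p then -\<i> else 0) - (if k = p \<and> l = q then \<i> else 0)) (b k l)"
      by (simp only: e1 e2 e3)
    also have "\<dots> = (if k = q \<and> l = p then a k l - s \<i> (b k l) else 0) - (if k = p \<and> l = q then a k l + s \<i> (b k l) else 0)"
      by (simp only: V.scale_left_diff_distrib ifscale V.scale_one V.scale_minus_left ifcomb)
    finally show ?thesis by (simp only: True simp_thms if_True)
  qed
  have "(\<Sum>k<n. \<Sum>l<n. T k l) \<in> C n" using n TC by (intro C_sum) auto
  moreover have "(\<Sum>k<n. \<Sum>l<n. T k l) = (\<lambda>p q. if p < n \<and> q < n then adj s C (Q q p) - Q p q else 0)"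
  proof (intro ext)
    fix p q
    show "(\<Sum>k<n. \<Sum>l<n. T k l) p q = (if p < n \<and> q < n then adj s C (Q q p) - Q p q else 0)"
    proof (cases "p < n \<and> q < n")
      case False
      then have "T k l p q = 0" for k l by (simp only: Tval[of k l p q] if_not_P[OF False] if_False)
      then show ?thesis by (simp only: sum_fun_app sum.neutral_const if_not_P[OF False])
    next
      case True
      have "(\<Sum>k<n. \<Sum>l<n. T k l) p q = (\<Sum>k<n. \<Sum>l<n. (if k = q \<and> l = p then a k l - s \<i> (b k l) else 0))
         - (\<Sum>k<n. \<Sum>l<n. (if k = p \<and> l = q then a k l + s \<i> (b k l) else 0))"
        using True by (simp add: sum_fun_app Tval sum_subtractf)
      also have "\<dots> = (a q p - s \<i> (b q p)) - (a p q + s \<i> (b p q))"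
        using True dsum[of p n q] dsum[of q n p] by simp
      finally show ?thesis using True adjQ Qab by simp
    qed
  qed
  ultimately show ?thesis by simp
qed

end


theorem proposition3p3:
  fixes sZ :: "complex \<Rightarrow> 'z::ab_group_add \<Rightarrow> 'z" and CZ :: "nat \<Rightarrow> 'z mat set"
    and sV :: "complex \<Rightarrow> 'v::ab_group_add \<Rightarrow> 'v" and CV :: "nat \<Rightarrow> 'v mat set"
    and \<psi> :: "'z \<Rightarrow> 'v" and e :: 'z
  assumes "accretive_amou_space sZ CZ e"
    and "star_closure sZ CZ sV CV \<psi>"
  shows "accretive_mo_unit sV CV (\<psi> e) \<and> archimedean_unit sV CV (\<psi> e)"
proof -
  from assms(1) have vsZ: "vector_space sZ" and uZ: "accretive_mo_unit sZ CZ e"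
    and arZ: "archimedean_unit sZ CZ e"
    unfolding accretive_amou_space_def accretive_mo_space_def by auto
  from assms(2) have saV: "self_adjoint sV CV" and emb: "real_complete_order_embedding sZ CZ sV CV \<psi>"
    and dec: "\<forall>v. \<exists>z w. v = \<psi> z + adj sV CV (\<psi> w)"
    unfolding star_closure_def by auto
  from saV have vsV: "vector_space sV" "matrix_cone sV CV" "C_proper sV CV"
    "module.span sV {v. emb1 v \<in> sa_part sV CV 1} = UNIV"
    unfolding self_adjoint_def accretive_mo_space_def by auto
  from emb have lin: "Vector_Spaces.linear sZ sV \<psi>" and rcp: "real_cp CZ CV \<psi>"
    and refl: "\<And>n A. n \<ge> 1 \<Longrightarrow> is_mat n A \<Longrightarrow> mmap \<psi> A \<in> CV n \<Longrightarrow> A \<in> CZ n"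
    unfolding real_complete_order_embedding_def by auto
  interpret Z: vector_space sZ by (rule vsZ)
  interpret L: Vector_Spaces.linear sZ sV \<psi> by (rule lin)
  have mm_scale: "mmap \<psi> (mscale sZ c A) = mscale sV c (mmap \<psi> A)" for c A
    unfolding mmap_def mscale_def by (simp add: L.scale)
  have mm_add: "mmap \<psi> (A + B) = mmap \<psi> A + mmap \<psi> B" for A B
    unfolding mmap_def by (rule ext)+ (simp add: L.add)
  have mm_emb1: "mmap \<psi> (emb1 z) = emb1 (\<psi> z)" for z
    unfolding mmap_def emb1_def by (rule ext)+ (simp add: L.zero)
  have mm_diag: "mmap \<psi> (diagm n z) = diagm n (\<psi> z)" for n z
    unfolding mmap_def diagm_def by (rule ext)+ (simp add: L.zero)
  have rcp': "n \<ge> 1 \<Longrightarrow> A \<in> CZ n \<Longrightarrow> mmap \<psi> A \<in> CV n" for n A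
    using rcp unfolding real_cp_def by auto
  have eZ: "emb1 e \<in> sa_part sZ CZ 1" using uZ unfolding accretive_mo_unit_def by auto
  have c1: "mmap \<psi> (mscale sZ (-\<i>) (emb1 e)) \<in> CV 1" "mmap \<psi> (mscale sZ \<i> (emb1 e)) \<in> CV 1"
    using eZ rcp'[of 1] unfolding sa_part_def by auto
  have sa: "emb1 (\<psi> e) \<in> sa_part sV CV 1"
    using c1 unfolding sa_part_def by (simp add: mm_scale mm_emb1)
  interpret V: sas sV CV
  proof
    show "CV 1 \<noteq> {}" using c1 by blast
  qed (use vsV in auto)
  have key: "\<exists>Y D. is_mat n Y \<and> D \<in> CV n \<and> (-D) \<in> CV n \<and> A = mmap \<psi> Y + D"
    if n: "n \<ge> 1" and A: "is_mat n A" for n and A :: "'v mat"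
  proof -
    obtain zf wf where zw: "\<And>v. v = \<psi> (zf v) + adj sV CV (\<psi> (wf v))" using dec by metis
    define Y where "Y = (\<lambda>p q. if p < n \<and> q < n then zf (A p q) + wf (A q p) else 0)"
    define Q where "Q = (\<lambda>p q. \<psi> (wf (A q p)))"
    define D where "D = (\<lambda>p q. if p < n \<and> q < n then adj sV CV (Q q p) - Q p q else 0)"
    have D: "D \<in> CV n" unfolding D_def by (rule V.skew[OF n])
    have "(\<lambda>p q. if p < n \<and> q < n then adj sV CV ((\<lambda>p q. - Q p q) q p) - (\<lambda>p q. - Q p q) p q else 0) \<in> CV n"
      by (rule V.skew[OF n])
    moreover have "(\<lambda>p q. if p < n \<and> q < n then adj sV CV ((\<lambda>p q. - Q p q) q p) - (\<lambda>p q. - Q p q) p q else 0) = - D"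
      unfolding D_def by (rule ext)+ (simp add: V.adj_neg)
    ultimately have nD: "- D \<in> CV n" by simp
    have isY: "is_mat n Y" unfolding is_mat_def Y_def by auto
    have "A = mmap \<psi> Y + D"
    proof (rule ext, rule ext)
      fix p q
      show "A p q = (mmap \<psi> Y + D) p q"
      proof (cases "p < n \<and> q < n")
        case True
        then show ?thesis unfolding Y_def D_def Q_def mmap_def plus_fun_apply
          using zw[of "A p q"] by (simp add: L.add)
      next
        case False
        then have "A p q = 0" using A unfolding is_mat_def by auto
        moreover have "Y p q = 0" "D p q = 0" using False unfolding Y_def D_def by auto
        ultimately show ?thesis unfolding mmap_def plus_fun_apply by (simp add: L.zero)
      qed
    qed
    then show ?thesis using isY D nD by blast
  qed
  have isW: "is_mat n (mscale sZ (complex_of_real t) (diagm n e) + Y)" if "is_mat n Y" for n t and Y :: "'z mat"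
    using that unfolding is_mat_def mscale_def diagm_def by auto
  have unit: "accretive_mo_unit sV CV (\<psi> e)"
    unfolding accretive_mo_unit_def
  proof (intro conjI allI impI sa)
    fix n :: nat and A :: "'v mat" assume n: "n \<ge> 1" and A: "is_mat n A"
    obtain Y D where YD: "is_mat n Y" "D \<in> CV n" "A = mmap \<psi> Y + D" using key[OF n A] by blast
    obtain t where t: "t > 0" "mscale sZ (complex_of_real t) (diagm n e) + Y \<in> CZ n"
      using uZ YD(1) n unfolding accretive_mo_unit_def by blast
    have "mmap \<psi> (mscale sZ (complex_of_real t) (diagm n e) + Y) + D \<in> CV n"
      using V.C_add[OF n rcp'[OF n t(2)] YD(2)] .
    then have "mscale sV (complex_of_real t) (diagm n (\<psi> e)) + A \<in> CV n"
      unfolding YD(3) mm_add mm_scale mm_diag by (simp add: add.assoc)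
    then show "\<exists>t>0. mscale sV (complex_of_real t) (diagm n (\<psi> e)) + A \<in> CV n" using t(1) by blast
  qed
  have arch: "archimedean_unit sV CV (\<psi> e)"
    unfolding archimedean_unit_def
  proof (intro allI impI)
    fix n :: nat and A :: "'v mat" assume n: "n \<ge> 1" and A: "is_mat n A"
      and H: "\<forall>t>0. mscale sV (complex_of_real t) (diagm n (\<psi> e)) + A \<in> CV n"
    obtain Y D where YD: "is_mat n Y" "D \<in> CV n" "- D \<in> CV n" "A = mmap \<psi> Y + D" using key[OF n A] by blast
    have "mscale sZ (complex_of_real t) (diagm n e) + Y \<in> CZ n" if t: "t > 0" for t
    proof (rule refl[OF n isW[OF YD(1)]])
      have "(mscale sV (complex_of_real t) (diagm n (\<psi> e)) + A) + - D \<in> CV n"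
        using V.C_add[OF n _ YD(3)] H t by blast
      then show "mmap \<psi> (mscale sZ (complex_of_real t) (diagm n e) + Y) \<in> CV n"
        unfolding YD(4) mm_add mm_scale mm_diag by (simp add: add.assoc)
    qed
    then have "Y \<in> CZ n" using arZ YD(1) n unfolding archimedean_unit_def by blast
    then show "A \<in> CV n" unfolding YD(4) using V.C_add[OF n rcp'[OF n] YD(2)] by blast
  qed
  show ?thesis using unit arch by blast
qed

end
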